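(* For every odd integer $s\ge5$ there exists a linear $(2,s-1,s,2)$-AONT.
   Context: A linear $(t_i,t_o,s,q)$-AONT is given by an invertible $s\times s$ matrix $M$ over $\mathbb{F}_q$ defining the map $\mathbf{x}\mapsto\mathbf{y}=\mathbf{x}M^{-1}$ on row vectors of $\mathbb{F}_q^s$, such that for every set $I$ of $t_i$ input coordinates and every set $J$ of $s-t_o$ output coordinates, the pair $((x_i)_{i\in I},(y_j)_{j\in J})$ takes every value in $\mathbb{F}_q^{t_i+s-t_o}$ equally often as $\mathbf{x}$ ranges over $\mathbb{F}_q^s$. Equivalently, $M$ is invertible and every $t_o\times t_i$ submatrix of $M$ has rank $t_i$. *)

theory Defs
  imports "HOL-Library.Z2" "Jordan_Normal_Form.DL_Rank" "Jordan_Normal_Form.DL_Submatrix"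
begin

text \<open>Rows of M correspond to outputs y, columns to inputs x, since
  x = y M.\<close>

definition linear_AONT :: "nat \<Rightarrow> nat \<Rightarrow> nat \<Rightarrow> nat \<Rightarrow> 'a::field mat \<Rightarrow> bool" where
  "linear_AONT t_i t_o s q M \<longleftrightarrow>
     q = card (UNIV :: 'a set) \<and>
     M \<in> carrier_mat s s \<and> invertible_mat M \<and>
     (\<forall>I J. I \<subseteq> {..<s} \<and> card I = t_i \<and> J \<subseteq> {..<s} \<and> card J = t_o \<longrightarrow>
        vec_space.rank t_o (submatrix M J I :: 'a mat) = t_i)"

end

theory Submission imports Defs "Jordan_Normal_Form.DL_Rank_Submatrix" begin

lemma card_bit: "card (UNIV::bit set) = 2"
proof -
  have u: "UNIV = {0::bit, 1}"
    by (metis (full_types) UNIV_eq_I bit_not_zero_iff insert_iff)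
  show ?thesis by (subst u) simp
qed

lemma of_nat_bit: "(of_nat n :: bit) = (if even n then 0 else 1)"
  by (induction n) auto

lemma det2: assumes A: "(A :: 'a :: comm_ring_1 mat) \<in> carrier_mat 2 2"
  shows "det A = A $$ (0,0) * A $$ (1,1) - A $$ (0,1) * A $$ (1,0)"
proof -
  have "det A = (\<Sum>j<2. A $$ (0,j) * cofactor A 0 j)"
    by (rule laplace_expansion_row[OF A], simp)
  also have "\<dots> = A $$ (0,0) * cofactor A 0 0 + A $$ (0,1) * cofactor A 0 1"
    by (simp add: numeral_2_eq_2)
  also have "cofactor A 0 0 = A $$ (1,1)"
    unfolding cofactor_def using A
    by (subst det_single, auto simp: mat_delete_def)
  also have "cofactor A 0 1 = - A $$ (1,0)"
    unfolding cofactor_def using A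
    by (subst det_single, auto simp: mat_delete_def)
  finally show ?thesis by simp
qed

lemma rank2:
  fixes B :: "'a::field mat"
  assumes B: "B \<in> carrier_mat n 2" and r: "r1 < r2" "r2 < n"
    and d: "B $$ (r1,0) * B $$ (r2,1) - B $$ (r1,1) * B $$ (r2,0) \<noteq> 0"
  shows "vec_space.rank n B = 2"
proof -
  let ?S = "submatrix B {r1,r2} UNIV"
  have c1: "{i. i < n \<and> i \<in> {r1,r2}} = {r1,r2}" using r by auto
  have c1': "card {i. i < dim_row B \<and> i \<in> {r1,r2}} = 2" using r B c1 by auto
  have c2: "card {j. j < dim_col B \<and> j \<in> (UNIV::nat set)} = 2" using B by auto
  have S: "?S \<in> carrier_mat 2 2"
    by (rule carrier_matI; simp only: dim_submatrix c1' c2)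
  have k1: "card {a\<in>{r1,r2}. a < r1} = 0" using r by auto
  have k2: "card {a\<in>{r1,r2}. a < r2} = 1"
  proof -
    have "{a\<in>{r1,r2}. a < r2} = {r1}" using r by auto
    then show ?thesis by simp
  qed
  have k3: "card {a\<in>(UNIV::nat set). a < 0} = 0" by simp
  have k4: "card {a\<in>(UNIV::nat set). a < 1} = 1"
  proof -
    have "{a\<in>(UNIV::nat set). a < 1} = {0}" by auto
    then show ?thesis by simp
  qed
  have rB: "r1 < dim_row B" "r2 < dim_row B" "0 < dim_col B" "1 < dim_col B" using r B by auto
  have e1: "?S $$ (card {a\<in>{r1,r2}. a < r1}, card {a\<in>(UNIV::nat set). a < 0}) = B $$ (r1,0)"
    by (rule submatrix_index_card) (use rB in auto)
  have e2: "?S $$ (card {a\<in>{r1,r2}. a < r1}, card {a\<in>(UNIV::nat set). a < 1}) = B $$ (r1,1)"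
    by (rule submatrix_index_card) (use rB in auto)
  have e3: "?S $$ (card {a\<in>{r1,r2}. a < r2}, card {a\<in>(UNIV::nat set). a < 0}) = B $$ (r2,0)"
    by (rule submatrix_index_card) (use rB in auto)
  have e4: "?S $$ (card {a\<in>{r1,r2}. a < r2}, card {a\<in>(UNIV::nat set). a < 1}) = B $$ (r2,1)"
    by (rule submatrix_index_card) (use rB in auto)
  have e: "?S $$ (0,0) = B $$ (r1,0)" "?S $$ (0,1) = B $$ (r1,1)"
       "?S $$ (1,0) = B $$ (r2,0)" "?S $$ (1,1) = B $$ (r2,1)"
    using e1 e2 e3 e4 unfolding k1 k2 k3 k4 by auto
  have "det ?S \<noteq> 0" using det2[OF S] e d by (simp add: mult.commute)
  then have "card {j. j < 2 \<and> j \<in> (UNIV::nat set)} \<le> vec_space.rank n B"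
    using vec_space.rank_gt_minor[OF B] by blast
  moreover have "vec_space.rank n B \<le> 2" using vec_space.rank_le_nc[OF B] .
  ultimately show ?thesis by simp
qed


lemma rankM_lt:
  fixes M :: "'a::field mat"
  assumes M: "M \<in> carrier_mat s s" and ab: "a < b" "b < s" and J: "J \<subseteq> {..<s}"
    and i: "i1 \<in> J" "i2 \<in> J" and lt: "i1 < i2"
    and d: "M $$ (i1,a) * M $$ (i2,b) - M $$ (i1,b) * M $$ (i2,a) \<noteq> 0"
  shows "vec_space.rank (card J) (submatrix M J {a,b}) = 2"
proof -
  let ?B = "submatrix M J {a,b}"
  have finJ: "finite J" using J finite_subset by blast
  have dimJ: "{i. i < dim_row M \<and> i \<in> J} = J" using J M by auto
  have dimI: "{j. j < dim_col M \<and> j \<in> {a,b}} = {a,b}" using ab M by auto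
  have cab: "card {a,b} = 2" using ab by simp
  have B: "?B \<in> carrier_mat (card J) 2"
    by (rule carrier_matI) (simp_all only: dim_submatrix dimJ dimI cab)
  have r12: "card {x\<in>J. x < i1} < card {x\<in>J. x < i2}"
    by (rule psubset_card_mono) (use finJ lt i in auto)
  have r2: "card {x\<in>J. x < i2} < card J"
    by (rule psubset_card_mono) (use finJ i in auto)
  have ka: "card {x\<in>{a,b}. x < a} = 0" using ab by auto
  have kb: "card {x\<in>{a,b}. x < b} = 1"
  proof -
    have "{x\<in>{a,b}. x < b} = {a}" using ab by auto
    then show ?thesis by simp
  qed
  have rM: "i1 < dim_row M" "i2 < dim_row M" "a < dim_col M" "b < dim_col M"
    using i J M ab by auto
  have e1: "?B $$ (card {x\<in>J. x < i1}, card {x\<in>{a,b}. x < a}) = M $$ (i1,a)"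
    by (rule submatrix_index_card) (use rM i in auto)
  have e2: "?B $$ (card {x\<in>J. x < i1}, card {x\<in>{a,b}. x < b}) = M $$ (i1,b)"
    by (rule submatrix_index_card) (use rM i in auto)
  have e3: "?B $$ (card {x\<in>J. x < i2}, card {x\<in>{a,b}. x < a}) = M $$ (i2,a)"
    by (rule submatrix_index_card) (use rM i in auto)
  have e4: "?B $$ (card {x\<in>J. x < i2}, card {x\<in>{a,b}. x < b}) = M $$ (i2,b)"
    by (rule submatrix_index_card) (use rM i in auto)
  note e = e1[unfolded ka] e2[unfolded kb] e3[unfolded ka] e4[unfolded kb]
  show ?thesis
    by (rule rank2[OF B r12 r2]) (simp only: e d not_False_eq_True)
qed

lemma rankM:
  fixes M :: "'a::field mat"
  assumes M: "M \<in> carrier_mat s s" and ab: "a < b" "b < s" and J: "J \<subseteq> {..<s}"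
    and i: "i1 \<in> J" "i2 \<in> J" "i1 \<noteq> i2"
    and d: "M $$ (i1,a) * M $$ (i2,b) - M $$ (i1,b) * M $$ (i2,a) \<noteq> 0"
  shows "vec_space.rank (card J) (submatrix M J {a,b}) = 2"
proof (cases "i1 < i2")
  case True
  show ?thesis by (rule rankM_lt[OF M ab J i(1,2) True d])
next
  case False
  then have lt: "i2 < i1" using i(3) by simp
  have eq: "M $$ (i2,a) * M $$ (i1,b) - M $$ (i2,b) * M $$ (i1,a)
      = - (M $$ (i1,a) * M $$ (i2,b) - M $$ (i1,b) * M $$ (i2,a))"
    by (simp add: algebra_simps)
  then have d': "M $$ (i2,a) * M $$ (i1,b) - M $$ (i2,b) * M $$ (i1,a) \<noteq> 0"
    unfolding eq using d by (simp only: neg_equal_0_iff_equal not_False_eq_True)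
  show ?thesis by (rule rankM_lt[OF M ab J i(2,1) lt d'])
qed

lemma sum_if_card: "finite A \<Longrightarrow> (\<Sum>j\<in>A. if P j then (1::'a::semiring_1) else 0) = of_nat (card {j\<in>A. P j})"
proof -
  assume "finite A"
  have "(\<Sum>j\<in>A. if P j then (1::'a) else 0) = (\<Sum>j\<in>{j\<in>A. P j}. 1)"
    using sum.inter_filter[OF \<open>finite A\<close>, of "\<lambda>_. (1::'a)" P] by simp
  then show ?thesis by simp
qed

lemma if01_mult: "(if A then 1 else 0) * (if B then 1 else (0::bit)) = (if A \<and> B then 1 else 0)"
  by simp

definition AM :: "nat \<Rightarrow> bit mat" where
  "AM s = mat s s (\<lambda>(i,j). if j = s - 1 \<or> (i \<noteq> j \<and> i \<noteq> s - 1) then 1 else 0)"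

lemma AM_carrier: "AM s \<in> carrier_mat s s" by (simp add: AM_def)

lemma AM_index: "i < s \<Longrightarrow> j < s \<Longrightarrow>
   AM s $$ (i,j) = (if j = s - 1 \<or> (i \<noteq> j \<and> i \<noteq> s - 1) then 1 else 0)"
  by (simp add: AM_def)

lemma AM_sq: assumes "odd s" "s \<ge> 3" shows "AM s * AM s = 1\<^sub>m s"
proof (rule eq_matI)
  fix i k assume "i < dim_row (1\<^sub>m s)" "k < dim_col (1\<^sub>m s)"
  hence ik: "i < s" "k < s" by auto
  have par: "even (s - 1)" "even (s - 3)" "odd (s - 2)" using assms by (auto elim!: oddE)
  let ?P = "\<lambda>j. (j = s - 1 \<or> (i \<noteq> j \<and> i \<noteq> s - 1)) \<and> (k = s - 1 \<or> (j \<noteq> k \<and> j \<noteq> s - 1))"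
  have "(AM s * AM s) $$ (i,k) = (\<Sum>j\<in>{0..<s}. AM s $$ (i,j) * AM s $$ (j,k))"
    using ik AM_carrier[of s] by (simp add: scalar_prod_def)
  also have "\<dots> = (\<Sum>j\<in>{0..<s}. if ?P j then 1 else 0)"
  proof (rule sum.cong)
    fix j assume "j \<in> {0..<s}"
    then have "j < s" by simp
    then show "AM s $$ (i,j) * AM s $$ (j,k) = (if ?P j then 1 else 0)"
      using ik by (simp only: AM_index if01_mult)
  qed simp
  also have "\<dots> = of_nat (card {j\<in>{0..<s}. ?P j})"
    by (rule sum_if_card) simp
  also have "\<dots> = 1\<^sub>m s $$ (i,k)"
  proof (cases "i = s - 1")
    case True
    have "{j\<in>{0..<s}. ?P j} = (if k = s - 1 then {s - 1} else {})"
      using True ik by auto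
    then show ?thesis using True ik by (auto simp: of_nat_bit)
  next
    case F: False
    show ?thesis
    proof (cases "k = s - 1")
      case True
      have "{j\<in>{0..<s}. ?P j} = {0..<s} - {i}" using True F ik by auto
      then have "card {j\<in>{0..<s}. ?P j} = s - 1" using ik by simp
      then show ?thesis using True F ik par by (simp add: of_nat_bit)
    next
      case False
      have "{j\<in>{0..<s}. ?P j} = {0..<s} - {i,k,s-1}" using False F ik by auto
      moreover have "card ({0..<s} - {i,k,s-1}) = s - card {i,k,s-1}"
        by (subst card_Diff_subset) (use ik in auto)
      moreover have "card {i,k,s-1} = (if i = k then 2 else 3)" using False F by auto
      ultimately have "card {j\<in>{0..<s}. ?P j} = (if i = k then s - 2 else s - 3)" by simp
      then show ?thesis using False F ik par by (simp add: of_nat_bit)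
    qed
  qed
  finally show "(AM s * AM s) $$ (i,k) = 1\<^sub>m s $$ (i,k)" .
qed (auto simp: AM_def)

lemma two_in_J:
  assumes J: "J \<subseteq> {..<s}" "card J = s - 1" and uv: "u < s" "v < s" "u \<noteq> v"
  shows "u \<in> J \<or> v \<in> J"
proof (rule ccontr)
  assume "\<not> (u \<in> J \<or> v \<in> J)"
  then have "J \<subseteq> {..<s} - {u,v}" using J by auto
  then have "card J \<le> card ({..<s} - {u,v})" by (intro card_mono) auto
  also have "\<dots> = s - 2" using uv by (subst card_Diff_subset) auto
  finally show False using J uv by linarith
qed

lemma pairs_exist:
  assumes s: "s \<ge> 5" and ab: "a < b" "b < s" and J: "J \<subseteq> {..<s}" "card J = s - 1"
  shows "\<exists>i1 i2. i1 \<in> J \<and> i2 \<in> J \<and> i1 \<noteq> i2 \<and>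
    AM s $$ (i1,a) * AM s $$ (i2,b) - AM s $$ (i1,b) * AM s $$ (i2,a) \<noteq> 0"
proof (cases "b = s - 1")
  case True
  define x1 where "x1 = (if a = 0 then 1 else (0::nat))"
  define x2 where "x2 = (if a = 2 then 1 else (2::nat))"
  have x: "x1 < 3" "x2 < 3" "x1 \<noteq> x2" "x1 \<noteq> a" "x2 \<noteq> a" unfolding x1_def x2_def by auto
  obtain z where z: "z \<in> J" "z = a \<or> z = s - 1"
    using two_in_J[OF J, of a "s - 1"] ab True s by auto
  obtain x where xx: "x \<in> J" "x = x1 \<or> x = x2"
    using two_in_J[OF J, of x1 x2] x s by auto
  have xa: "x < 3" "x \<noteq> a" using xx x by auto
  have "z \<noteq> x" using z xa s by auto
  moreover have "AM s $$ (z,a) * AM s $$ (x,b) - AM s $$ (z,b) * AM s $$ (x,a) \<noteq> 0"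
    using z xa s ab True by (auto simp: AM_index)
  ultimately show ?thesis using z xx by blast
next
  case False
  define x where "x = (if 0 \<notin> {a,b} then 0 else if 1 \<notin> {a,b} then 1 else (2::nat))"
  have x: "x < 3" "x \<noteq> a" "x \<noteq> b" unfolding x_def using ab by auto
  have nb: "b < s - 1" using False ab by simp
  consider "a \<in> J" "b \<in> J" | "a \<notin> J" "b \<in> J" "x \<in> J" | "b \<notin> J" "a \<in> J" "x \<in> J"
    using two_in_J[OF J, of a b] two_in_J[OF J, of a x] two_in_J[OF J, of b x] ab x s by force
  then show ?thesis
  proof cases
    case 1
    have "AM s $$ (a,a) * AM s $$ (b,b) - AM s $$ (a,b) * AM s $$ (b,a) \<noteq> 0"
      using ab nb by (auto simp: AM_index)
    then show ?thesis using 1 ab by blast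
  next
    case 2
    have "AM s $$ (b,a) * AM s $$ (x,b) - AM s $$ (b,b) * AM s $$ (x,a) \<noteq> 0"
      using ab nb x s by (auto simp: AM_index)
    then show ?thesis using 2 x by blast
  next
    case 3
    have "AM s $$ (a,a) * AM s $$ (x,b) - AM s $$ (a,b) * AM s $$ (x,a) \<noteq> 0"
      using ab nb x s by (auto simp: AM_index)
    then show ?thesis using 3 x by blast
  qed
qed

theorem mainTheorem14:
  fixes s :: nat
  assumes "odd s" and "s \<ge> 5"
  shows "\<exists>M :: bit mat. linear_AONT 2 (s - 1) s 2 M"
proof (intro exI)
  have inv: "invertible_mat (AM s)"
    unfolding invertible_mat_def inverts_mat_def square_mat.simps
    using AM_sq[OF assms(1)] assms(2) by (auto simp: AM_def)
  have rk: "vec_space.rank (s - 1) (submatrix (AM s) J I) = 2"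
    if H: "I \<subseteq> {..<s}" "card I = 2" "J \<subseteq> {..<s}" "card J = s - 1" for I J
  proof -
    obtain x y where xy: "I = {x,y}" "x \<noteq> y" using H(2) card_2_iff by metis
    obtain a b where ab: "I = {a,b}" "a < b"
    proof (cases "x < y")
      case True then show ?thesis using that xy by blast
    next
      case False then have "y < x" using xy by simp
      then show ?thesis using that xy by (metis insert_commute)
    qed
    have bs: "b < s" using H(1) ab by auto
    obtain i1 i2 where i: "i1 \<in> J" "i2 \<in> J" "i1 \<noteq> i2"
      and d: "AM s $$ (i1,a) * AM s $$ (i2,b) - AM s $$ (i1,b) * AM s $$ (i2,a) \<noteq> 0"
      using pairs_exist[OF assms(2) ab(2) bs H(3,4)] by blast
    show ?thesis using rankM[OF AM_carrier ab(2) bs H(3) i d] ab(1) H(4) by simp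
  qed
  show "linear_AONT 2 (s - 1) s 2 (AM s)"
    unfolding linear_AONT_def using card_bit AM_carrier inv rk by auto
qed

end
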